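(* Let $\phi$ be a character (unital algebra homomorphism to $\mathbb K$) of the block-substitution bialgebra $\mathbf{B}$ of noncrossing partitions. Then $\phi$ is invertible in the monoid of characters of $\mathbf{B}$ under convolution if and only if $\phi(I_n)\neq0$ for all $n\geq1$, where $I_n=\{[n]\}$.
   Context: $\mathbb K$ is a field of characteristic zero. Noncrossing partitions of $[n]$: no $a<c<b<d$ with $a,b$ in one block and $c,d$ in another; partitions of finite linearly ordered sets are identified with partitions of $[m]$ via the order-preserving bijection; $P_{|X}$ is the induced partition on $X$. $\mathbf{B}$ is the free commutative unital algebra generated by nonempty noncrossing partitions. For noncrossing $P\leq Q$ of $[n]$ (each block of $Q$ a union of blocks of $P$), $Q=\{\tau_1,\dots,\tau_l\}$, put $P/Q=P_{|\tau_1}\cdots P_{|\tau_l}$. The coproduct is $\delta(P)=\sum_{Q\geq P\text{ noncrossing}}Q\otimes P/Q$, extended multiplicatively; counit $\varepsilon(P)=1$ if $P$ has one block and $0$ otherwise. The convolution of characters is $\phi*\psi=m_{\mathbb K}\circ(\phi\otimes\psi)\circ\delta$, with unit $\varepsilon$. *)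

theory Defs
  imports Main "HOL-Library.Multiset"
begin

definition is_partition :: "nat \<Rightarrow> nat set set \<Rightarrow> bool" where
  "is_partition n P \<longleftrightarrow> (\<forall>B\<in>P. B \<noteq> {}) \<and>
     (\<forall>B\<in>P. \<forall>C\<in>P. B \<noteq> C \<longrightarrow> B \<inter> C = {}) \<and> \<Union>P = {1..n}"

definition noncrossing :: "nat set set \<Rightarrow> bool" where
  "noncrossing P \<longleftrightarrow> \<not> (\<exists>B\<in>P. \<exists>C\<in>P. B \<noteq> C \<and>
     (\<exists>a b c d. a \<in> B \<and> b \<in> B \<and> c \<in> C \<and> d \<in> C \<and> a < c \<and> c < b \<and> b < d))"

definition NC :: "nat \<Rightarrow> nat set set \<Rightarrow> bool" where
  "NC n P \<longleftrightarrow> is_partition n P \<and> noncrossing P"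

text \<open>Generators of B: nonempty noncrossing partitions (of [n], n \<ge> 1).\<close>
definition nc_gen :: "nat set set \<Rightarrow> bool" where
  "nc_gen P \<longleftrightarrow> (\<exists>n\<ge>1. NC n P)"

text \<open>Monomials of the free commutative algebra B: finite multisets of generators
  (the empty multiset is the unit).\<close>
definition monomial :: "nat set set multiset \<Rightarrow> bool" where
  "monomial M \<longleftrightarrow> (\<forall>P\<in>#M. nc_gen P)"

definition psize :: "nat set set \<Rightarrow> nat" where
  "psize P = card (\<Union>P)"

definition refines :: "nat set set \<Rightarrow> nat set set \<Rightarrow> bool" where
  "refines P Q \<longleftrightarrow> (\<forall>B\<in>P. \<exists>C\<in>Q. B \<subseteq> C)"

text \<open>Order-preserving bijection from a finite X \<subseteq> nat onto {1..card X}.\<close>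
definition std :: "nat set \<Rightarrow> nat \<Rightarrow> nat" where
  "std X x = card {y\<in>X. y \<le> x}"

text \<open>Induced partition P|X, relabelled to a partition of [card X].\<close>
definition restr :: "nat set set \<Rightarrow> nat set \<Rightarrow> nat set set" where
  "restr P X = {std X ` (B \<inter> X) | B. B \<in> P \<and> B \<inter> X \<noteq> {}}"

definition quot :: "nat set set \<Rightarrow> nat set set \<Rightarrow> nat set set multiset" where
  "quot P Q = image_mset (restr P) (mset_set Q)"

text \<open>Convolution of characters phi * psi = m o (phi \<otimes> psi) o delta, evaluated on a
  monomial; delta is multiplicative and phi, psi are characters, so this is the product
  over the factors P of sum over noncrossing Q \<ge> P of phi(Q) psi(P/Q).\<close>
definition conv :: "(nat set set multiset \<Rightarrow> 'a::field_char_0) \<Rightarrow> (nat set set multiset \<Rightarrow> 'a)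
    \<Rightarrow> nat set set multiset \<Rightarrow> 'a" where
  "conv \<phi> \<psi> M = (\<Prod>P\<in>#M. \<Sum>Q\<in>{Q. NC (psize P) Q \<and> refines P Q}. \<phi> {#Q#} * \<psi> (quot P Q))"

definition counit :: "nat set set multiset \<Rightarrow> 'a::field_char_0" where
  "counit M = (\<Prod>P\<in>#M. if card P = 1 then 1 else 0)"

text \<open>Characters: unital algebra homomorphisms B \<rightarrow> K, given by their values on the
  monomial basis (linear extension), i.e. unital and multiplicative on monomials.\<close>
definition is_char :: "(nat set set multiset \<Rightarrow> 'a::field_char_0) \<Rightarrow> bool" where
  "is_char \<phi> \<longleftrightarrow> \<phi> {#} = 1 \<and>
     (\<forall>M N. monomial M \<longrightarrow> monomial N \<longrightarrow> \<phi> (M + N) = \<phi> M * \<phi> N)"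

text \<open>Invertibility in the monoid of characters (equality of characters = equality on B,
  i.e. on all monomials).\<close>
definition char_invertible :: "(nat set set multiset \<Rightarrow> 'a::field_char_0) \<Rightarrow> bool" where
  "char_invertible \<phi> \<longleftrightarrow> (\<exists>\<psi>. is_char \<psi> \<and>
     (\<forall>M. monomial M \<longrightarrow> conv \<phi> \<psi> M = counit M \<and> conv \<psi> \<phi> M = counit M))"

end

theory Submission
  imports Defs "HOL-Library.FuncSet"
begin


definition part :: "nat set \<Rightarrow> nat set set \<Rightarrow> bool" where
  "part X P \<longleftrightarrow> (\<forall>B\<in>P. B \<noteq> {}) \<and> (\<forall>B\<in>P. \<forall>C\<in>P. B \<noteq> C \<longrightarrow> B \<inter> C = {}) \<and> \<Union>P = X"

definition Up :: "nat set set \<Rightarrow> nat set set set" where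
  "Up P = {Q. NC (psize P) Q \<and> refines P Q}"

lemma std_mono:
  assumes "finite X" "x \<in> X" "y \<in> X" "x < y"
  shows "std X x < std X y"
proof -
  have "{z\<in>X. z \<le> x} \<subseteq> {z\<in>X. z \<le> y}" using assms by auto
  moreover have "y \<in> {z\<in>X. z \<le> y}" "y \<notin> {z\<in>X. z \<le> x}" using assms by auto
  ultimately have "{z\<in>X. z \<le> x} \<subset> {z\<in>X. z \<le> y}" by blast
  moreover have "finite {z\<in>X. z \<le> y}" using assms by auto
  ultimately show ?thesis unfolding std_def by (rule psubset_card_mono[rotated])
qed

lemma std_less_iff:
  assumes "finite X" "x \<in> X" "y \<in> X"
  shows "std X x < std X y \<longleftrightarrow> x < y"
  using std_mono[OF assms] std_mono[OF assms(1,3,2)]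
  by (cases x y rule: linorder_cases) auto

lemma std_inj: "finite X \<Longrightarrow> inj_on (std X) X"
  by (rule inj_onI, metis linorder_neqE_nat std_mono order_less_irrefl)

lemma std_range:
  assumes "finite X" "x \<in> X"
  shows "std X x \<in> {1..card X}"
proof -
  have f: "finite {z\<in>X. z \<le> x}" using assms by auto
  have ne: "{z\<in>X. z \<le> x} \<noteq> {}" using assms by auto
  have "card {z\<in>X. z \<le> x} > 0" using f ne by (simp add: card_gt_0_iff)
  hence "std X x \<ge> 1" unfolding std_def by simp
  moreover have "std X x \<le> card X" unfolding std_def using assms by (intro card_mono) auto
  ultimately show ?thesis by auto
qed

lemma std_image: assumes "finite X" shows "std X ` X = {1..card X}"
proof -
  have "std X ` X \<subseteq> {1..card X}" using std_range[OF assms] by auto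
  moreover have "card (std X ` X) = card {1..card X}"
    using card_image[OF std_inj[OF assms]] by simp
  moreover have "finite {1..card X}" by simp
  ultimately show ?thesis using card_subset_eq by metis
qed

lemma std_bij: "finite X \<Longrightarrow> bij_betw (std X) X {1..card X}"
  by (simp add: bij_betw_def std_inj std_image)

lemma std_le_iff:
  assumes "finite X" "x \<in> X" "y \<in> X"
  shows "std X x \<le> std X y \<longleftrightarrow> x \<le> y"
  using std_less_iff[OF assms(1,3,2)] by (simp add: not_less[symmetric])

lemma std_comp:
  assumes "finite X" "Y \<subseteq> X" "y \<in> Y"
  shows "std (std X ` Y) (std X y) = std Y y"
proof -
  have e: "{w \<in> std X ` Y. w \<le> std X y} = std X ` {z\<in>Y. z \<le> y}"
  proof (rule set_eqI, rule iffI)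
    fix w assume "w \<in> {w \<in> std X ` Y. w \<le> std X y}"
    then obtain z where z: "z \<in> Y" "w = std X z" "std X z \<le> std X y" by blast
    hence "z \<le> y" using std_le_iff[OF assms(1), of z y] assms(2,3) by blast
    thus "w \<in> std X ` {z\<in>Y. z \<le> y}" using z by blast
  next
    fix w assume "w \<in> std X ` {z\<in>Y. z \<le> y}"
    then obtain z where z: "z \<in> Y" "w = std X z" "z \<le> y" by blast
    hence "std X z \<le> std X y" using std_le_iff[OF assms(1), of z y] assms(2,3) by blast
    thus "w \<in> {w \<in> std X ` Y. w \<le> std X y}" using z by blast
  qed
  have "inj_on (std X) {z\<in>Y. z \<le> y}"
    by (rule inj_on_subset[OF std_inj[OF assms(1)]]) (use assms(2) in auto)
  hence "card (std X ` {z\<in>Y. z \<le> y}) = card {z\<in>Y. z \<le> y}" by (rule card_image)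
  thus ?thesis unfolding std_def[of "std X ` Y"] std_def[of Y] e .
qed

lemma std_id: "x \<in> {1..n} \<Longrightarrow> std {1..n} x = x"
proof -
  assume "x \<in> {1..n}"
  hence "{y \<in> {1..n}. y \<le> x} = {1..x}" by auto
  thus ?thesis unfolding std_def by simp
qed



lemma NC_part: "NC n P \<Longrightarrow> part {1..n} P"
  unfolding NC_def is_partition_def part_def by simp

lemma NC_nc: "NC n P \<Longrightarrow> noncrossing P"
  unfolding NC_def by simp

lemma NC_iff: "NC n P \<longleftrightarrow> part {1..n} P \<and> noncrossing P"
  unfolding NC_def is_partition_def part_def by simp

lemma part_sub: "part X P \<Longrightarrow> B \<in> P \<Longrightarrow> B \<subseteq> X"
  unfolding part_def by blast

lemma part_ne: "part X P \<Longrightarrow> B \<in> P \<Longrightarrow> B \<noteq> {}"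
  unfolding part_def by blast

lemma part_disj: "part X P \<Longrightarrow> B \<in> P \<Longrightarrow> C \<in> P \<Longrightarrow> B \<noteq> C \<Longrightarrow> B \<inter> C = {}"
  unfolding part_def by blast

lemma part_Un: "part X P \<Longrightarrow> \<Union>P = X"
  unfolding part_def by blast

lemma part_cover: "part X P \<Longrightarrow> x \<in> X \<Longrightarrow> \<exists>B\<in>P. x \<in> B"
  unfolding part_def by blast

lemma part_eq: "part X P \<Longrightarrow> B \<in> P \<Longrightarrow> C \<in> P \<Longrightarrow> x \<in> B \<Longrightarrow> x \<in> C \<Longrightarrow> B = C"
  unfolding part_def by blast

lemma part_finite: "part X P \<Longrightarrow> finite X \<Longrightarrow> finite P"
proof -
  assume "part X P" "finite X"
  hence "P \<subseteq> Pow X" using part_sub by blast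
  thus "finite P" using \<open>finite X\<close> by (simp add: finite_subset)
qed

lemma psize_NC: "NC n P \<Longrightarrow> psize P = n"
  unfolding psize_def using NC_part part_Un by fastforce

lemma restr_Un: "\<Union>(restr P X) = std X ` (\<Union>P \<inter> X)"
  unfolding restr_def by blast

lemma restr_part:
  assumes "finite X" "part X0 P" "X \<subseteq> X0"
  shows "part {1..card X} (restr P X)"
  unfolding part_def
proof (intro conjI ballI impI)
  fix b assume "b \<in> restr P X" thus "b \<noteq> {}" unfolding restr_def by blast
next
  fix b c assume "b \<in> restr P X" "c \<in> restr P X" "b \<noteq> c"
  then obtain B C where B: "B \<in> P" "b = std X ` (B \<inter> X)" and C: "C \<in> P" "c = std X ` (C \<inter> X)"
    unfolding restr_def by blast
  have "B \<noteq> C" using B C \<open>b \<noteq> c\<close> by blast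
  hence "B \<inter> C = {}" using part_disj[OF assms(2)] B C by blast
  hence "(B \<inter> X) \<inter> (C \<inter> X) = {}" by blast
  moreover have "std X ` ((B \<inter> X) \<inter> (C \<inter> X)) = std X ` (B \<inter> X) \<inter> std X ` (C \<inter> X)"
    by (rule inj_on_image_Int[OF std_inj[OF assms(1)]]) auto
  ultimately show "b \<inter> c = {}" using B C by simp
next
  have "\<Union>P \<inter> X = X" using part_Un[OF assms(2)] assms(3) by blast
  thus "\<Union>(restr P X) = {1..card X}" unfolding restr_Un using std_image[OF assms(1)] by simp
qed

lemma restr_nc:
  assumes "finite X" "noncrossing P"
  shows "noncrossing (restr P X)"
  unfolding noncrossing_def
proof (rule notI, elim bexE exE conjE)
  fix b c a' b' c' d'
  assume bc: "b \<in> restr P X" "c \<in> restr P X" "b \<noteq> c"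
    and pts: "a' \<in> b" "b' \<in> b" "c' \<in> c" "d' \<in> c" "a' < c'" "c' < b'" "b' < d'"
  from bc obtain B C where B: "B \<in> P" "b = std X ` (B \<inter> X)" and C: "C \<in> P" "c = std X ` (C \<inter> X)"
    unfolding restr_def by blast
  have "B \<noteq> C" using B C \<open>b \<noteq> c\<close> by blast
  obtain a where a: "a \<in> B" "a \<in> X" "a' = std X a" using pts B by blast
  obtain bb where bb: "bb \<in> B" "bb \<in> X" "b' = std X bb" using pts B by blast
  obtain cc where cc: "cc \<in> C" "cc \<in> X" "c' = std X cc" using pts C by blast
  obtain d where d: "d \<in> C" "d \<in> X" "d' = std X d" using pts C by blast
  have "a < cc" using std_less_iff[OF assms(1) a(2) cc(2)] a cc pts by simp
  moreover have "cc < bb" using std_less_iff[OF assms(1) cc(2) bb(2)] bb cc pts by simp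
  moreover have "bb < d" using std_less_iff[OF assms(1) bb(2) d(2)] bb d pts by simp
  ultimately have "a \<in> B \<and> bb \<in> B \<and> cc \<in> C \<and> d \<in> C \<and> a < cc \<and> cc < bb \<and> bb < d"
    using a bb cc d by simp
  hence "\<exists>B\<in>P. \<exists>C\<in>P. B \<noteq> C \<and> (\<exists>a b c d. a \<in> B \<and> b \<in> B \<and> c \<in> C \<and> d \<in> C \<and> a < c \<and> c < b \<and> b < d)"
    using \<open>B \<noteq> C\<close> B(1) C(1) by (intro bexI[of _ B] bexI[of _ C]) auto
  thus False using assms(2) unfolding noncrossing_def by simp
qed

lemma restr_NC:
  assumes "NC n P" "X \<subseteq> {1..n}"
  shows "NC (card X) (restr P X)"
proof -
  have f: "finite X" using assms(2) finite_subset by blast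
  show ?thesis unfolding NC_iff
    using restr_part[OF f NC_part[OF assms(1)] assms(2)] restr_nc[OF f NC_nc[OF assms(1)]] by simp
qed

lemma restr_gen:
  assumes "NC n P" "X \<subseteq> {1..n}" "X \<noteq> {}"
  shows "nc_gen (restr P X)"
proof -
  have "finite X" using assms(2) finite_subset by blast
  hence "card X \<ge> 1" using assms(3) by (simp add: Suc_leI card_gt_0_iff)
  thus ?thesis unfolding nc_gen_def using restr_NC[OF assms(1,2)] by blast
qed

lemma psize_restr:
  assumes "NC n P" "X \<subseteq> {1..n}"
  shows "psize (restr P X) = card X"
  using psize_NC[OF restr_NC[OF assms]] .

lemma finite_Up: "finite (Up P)"
proof -
  have "Up P \<subseteq> Pow (Pow {1..psize P})"
    unfolding Up_def using NC_part part_sub by blast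
  thus ?thesis by (rule finite_subset) simp
qed

lemma nc_gen_NC: "nc_gen P \<Longrightarrow> NC (psize P) P \<and> psize P \<ge> 1"
  unfolding nc_gen_def using psize_NC by blast



lemma char_prod:
  assumes "is_char c" "\<forall>x\<in>#M. nc_gen x"
  shows "c M = (\<Prod>x\<in>#M. c {#x#})"
  using assms(2)
proof (induction M)
  case empty
  then show ?case using assms(1) unfolding is_char_def by simp
next
  case (add x M)
  have "c (add_mset x M) = c ({#x#} + M)" by simp
  also have "\<dots> = c {#x#} * c M"
  proof -
    have h: "\<And>M N. monomial M \<Longrightarrow> monomial N \<Longrightarrow> c (M+N) = c M * c N"
      using assms(1) unfolding is_char_def by blast
    show ?thesis by (rule h) (use add.prems in \<open>auto simp: monomial_def\<close>)
  qed
  finally show ?case using add by simp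
qed

lemma prod_mset_img: "(\<Prod>x\<in># image_mset f (mset_set A). g x) = (\<Prod>a\<in>A. g (f a))"
  by (simp add: prod_unfold_prod_mset multiset.map_comp comp_def)

lemma part_block_sub: "NC n Q \<Longrightarrow> \<tau> \<in> Q \<Longrightarrow> \<tau> \<subseteq> {1..n}"
  using NC_part part_sub by blast

lemma part_block_ne: "NC n Q \<Longrightarrow> \<tau> \<in> Q \<Longrightarrow> \<tau> \<noteq> {}"
  using NC_part part_ne by blast

lemma NC_finite: "NC n Q \<Longrightarrow> finite Q"
  using NC_part part_finite by blast

lemma quot_gen:
  assumes "NC n P" "NC n Q"
  shows "\<forall>x\<in># quot P Q. nc_gen x"
proof
  fix x assume "x \<in># quot P Q"
  then obtain \<tau> where "\<tau> \<in> Q" "x = restr P \<tau>"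
    unfolding quot_def using NC_finite[OF assms(2)] by auto
  thus "nc_gen x" using restr_gen[OF assms(1)] part_block_sub[OF assms(2)] part_block_ne[OF assms(2)] by blast
qed

lemma quot_monomial: "NC n P \<Longrightarrow> NC n Q \<Longrightarrow> monomial (quot P Q)"
  using quot_gen unfolding monomial_def by blast

lemma quot_char:
  assumes "is_char c" "NC n P" "NC n Q"
  shows "c (quot P Q) = (\<Prod>\<tau>\<in>Q. c {#restr P \<tau>#})"
  using char_prod[OF assms(1) quot_gen[OF assms(2,3)]] unfolding quot_def prod_mset_img .

lemma conv_single: "conv a b {#P#} = (\<Sum>Q\<in>Up P. a {#Q#} * b (quot P Q))"
  unfolding conv_def Up_def by simp

lemma conv_mult: "conv a b M = (\<Prod>P\<in>#M. conv a b {#P#})"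
  unfolding conv_def by simp

lemma Up_NC: "Q \<in> Up P \<Longrightarrow> NC (psize P) Q"
  unfolding Up_def by simp

lemma Up_ref: "Q \<in> Up P \<Longrightarrow> refines P Q"
  unfolding Up_def by simp

lemma conv_cong:
  assumes "\<And>M. monomial M \<Longrightarrow> a M = a' M" "\<And>M. monomial M \<Longrightarrow> b M = b' M" "monomial M"
  shows "conv a b M = conv a' b' M"
proof -
  have "conv a b {#P#} = conv a' b' {#P#}" if "P \<in># M" for P
  proof -
    have g: "nc_gen P" using that assms(3) unfolding monomial_def by blast
    have "a {#Q#} * b (quot P Q) = a' {#Q#} * b' (quot P Q)" if "Q \<in> Up P" for Q
    proof -
      have "monomial {#Q#}" using Up_NC[OF that] nc_gen_NC[OF g]
        unfolding monomial_def nc_gen_def by auto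
      moreover have "monomial (quot P Q)" using quot_monomial Up_NC[OF that] nc_gen_NC[OF g] by blast
      ultimately show ?thesis using assms(1,2) by simp
    qed
    thus ?thesis unfolding conv_single by (rule sum.cong[OF refl])
  qed
  thus ?thesis unfolding conv_mult[of a b M] conv_mult[of a' b' M]
    by (intro arg_cong[where f=prod_mset] image_mset_cong) simp
qed



lemma NC_In: "n \<ge> 1 \<Longrightarrow> NC n {{1..n}}"
  unfolding NC_iff part_def noncrossing_def by auto

lemma psize_In: "psize {{1..n}} = n"
  unfolding psize_def by simp

lemma NC_one_block:
  assumes "NC n Q" "C \<in> Q" "{1..n} \<subseteq> C"
  shows "Q = {{1..n}}"
proof -
  have C: "C = {1..n}" using part_block_sub[OF assms(1,2)] assms(3) by blast
  have "D = C" if "D \<in> Q" for D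
  proof (rule ccontr)
    assume "D \<noteq> C"
    hence "D \<inter> C = {}" using part_disj[OF NC_part[OF assms(1)] that assms(2)] by blast
    moreover have "D \<subseteq> C" using part_block_sub[OF assms(1) that] C by simp
    ultimately show False using part_block_ne[OF assms(1) that] by blast
  qed
  thus ?thesis using assms(2) C by blast
qed

lemma Up_In: "n \<ge> 1 \<Longrightarrow> Up {{1..n}} = {{{1..n}}}"
proof (rule set_eqI, rule iffI)
  fix Q assume n: "n \<ge> 1" and "Q \<in> Up {{1..n}}"
  hence Q: "NC n Q" "refines {{1..n}} Q" using Up_NC Up_ref psize_In by metis+
  then obtain C where "C \<in> Q" "{1..n} \<subseteq> C" unfolding refines_def by blast
  thus "Q \<in> {{{1..n}}}" using NC_one_block[OF Q(1)] by blast
next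
  fix Q assume n: "n \<ge> 1" and "Q \<in> {{{1..n}}}"
  thus "Q \<in> Up {{1..n}}" unfolding Up_def refines_def psize_In using NC_In[OF n] by auto
qed

lemma restr_full:
  assumes "NC n P"
  shows "restr P {1..n} = P"
proof -
  have "std {1..n} ` (B \<inter> {1..n}) = B" if "B \<in> P" for B
  proof -
    have "B \<subseteq> {1..n}" using part_block_sub[OF assms that] .
    hence "B \<inter> {1..n} = B" by blast
    moreover have "std {1..n} ` B = B" using \<open>B \<subseteq> {1..n}\<close> std_id
      by (metis (no_types, lifting) image_cong image_ident subsetD)
    ultimately show ?thesis by simp
  qed
  moreover have "B \<inter> {1..n} \<noteq> {}" if "B \<in> P" for B
    using part_block_sub[OF assms that] part_block_ne[OF assms that] by blast
  ultimately show ?thesis unfolding restr_def by (auto intro!: exI)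
qed

lemma quot_top: "NC n P \<Longrightarrow> quot P {{1..n}} = {#P#}"
  unfolding quot_def using restr_full by simp

lemma top_in_Up:
  assumes "nc_gen P"
  shows "{{1..psize P}} \<in> Up P"
proof -
  have "NC (psize P) P" "psize P \<ge> 1" using nc_gen_NC[OF assms] by auto
  thus ?thesis unfolding Up_def refines_def using NC_In part_block_sub by blast
qed

lemma self_in_Up: "nc_gen P \<Longrightarrow> P \<in> Up P"
  unfolding Up_def refines_def using nc_gen_NC by blast

lemma card1_top:
  assumes "NC n Q" "card Q = 1"
  shows "Q = {{1..n}}"
proof -
  obtain C where "Q = {C}" using assms(2) card_1_singletonE by blast
  moreover have "\<Union>Q = {1..n}" using part_Un[OF NC_part[OF assms(1)]] .
  ultimately show ?thesis by simp
qed

lemma conv_unit_left: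
  assumes "nc_gen P"
  shows "conv counit \<chi> {#P#} = \<chi> {#P#}"
proof -
  let ?T = "{{1..psize P}}"
  have "(\<Sum>Q\<in>Up P. counit {#Q#} * \<chi> (quot P Q)) = (\<Sum>Q\<in>Up P. if Q = ?T then \<chi> (quot P Q) else 0)"
  proof (rule sum.cong[OF refl])
    fix Q assume Q: "Q \<in> Up P"
    have "card Q = 1 \<longleftrightarrow> Q = ?T" using card1_top[OF Up_NC[OF Q]] by auto
    thus "counit {#Q#} * \<chi> (quot P Q) = (if Q = ?T then \<chi> (quot P Q) else 0)"
      unfolding counit_def by simp
  qed
  also have "\<dots> = \<chi> (quot P ?T)" using top_in_Up[OF assms] finite_Up by simp
  also have "\<dots> = \<chi> {#P#}" using quot_top nc_gen_NC[OF assms] by metis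
  finally show ?thesis unfolding conv_single .
qed

lemma restr_self:
  assumes "NC n P" "B \<in> P"
  shows "restr P B = {std B ` B}"
proof -
  have "B' \<inter> B \<noteq> {} \<Longrightarrow> B' \<in> P \<Longrightarrow> B' = B" for B'
    using part_disj[OF NC_part[OF assms(1)] _ assms(2)] by blast
  thus ?thesis unfolding restr_def using assms(2) part_block_ne[OF assms] by auto
qed

lemma card1_block:
  assumes Q: "Q \<in> Up P" and g: "nc_gen P" and \<tau>: "\<tau> \<in> Q" and c: "card (restr P \<tau>) = 1"
  shows "\<tau> \<in> P"
proof -
  let ?n = "psize P"
  have P: "NC ?n P" using nc_gen_NC[OF g] by blast
  have QN: "NC ?n Q" using Up_NC[OF Q] .
  have fin: "finite \<tau>" using part_block_sub[OF QN \<tau>] finite_subset by blast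
  obtain b where b: "restr P \<tau> = {b}" using c card_1_singletonE by blast
  have blk: "\<exists>B\<in>P. y \<in> B \<and> B \<subseteq> \<tau>" if y: "y \<in> \<tau>" for y
  proof -
    obtain B where B: "B \<in> P" "y \<in> B"
      using part_cover[OF NC_part[OF P]] part_block_sub[OF QN \<tau>] y by blast
    obtain t where t: "t \<in> Q" "B \<subseteq> t" using Up_ref[OF Q] B unfolding refines_def by blast
    have "t = \<tau>" using part_eq[OF NC_part[OF QN] t(1) \<tau>] B t y by blast
    thus ?thesis using B t by blast
  qed
  obtain x where x: "x \<in> \<tau>" using part_block_ne[OF QN \<tau>] by blast
  obtain B where B: "B \<in> P" "x \<in> B" "B \<subseteq> \<tau>" using blk[OF x] by blast
  have imgB: "std \<tau> ` B = b"
  proof -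
    have "std \<tau> ` (B \<inter> \<tau>) \<in> restr P \<tau>" unfolding restr_def using B by blast
    thus ?thesis using b B(3) by (simp add: Int_absorb2)
  qed
  have "\<tau> \<subseteq> B"
  proof
    fix y assume y: "y \<in> \<tau>"
    obtain B' where B': "B' \<in> P" "y \<in> B'" "B' \<subseteq> \<tau>" using blk[OF y] by blast
    have "std \<tau> ` (B' \<inter> \<tau>) \<in> restr P \<tau>" unfolding restr_def using B' by blast
    hence "std \<tau> ` B' = b" using b B'(3) by (simp add: Int_absorb2)
    hence "std \<tau> ` B' = std \<tau> ` B" using imgB by simp
    hence "B' = B" using inj_on_image_eq_iff[OF std_inj[OF fin] B'(3) B(3)] by simp
    thus "y \<in> B" using B' by simp
  qed
  thus ?thesis using B by (metis subset_antisym)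
qed

lemma conv_unit_right:
  fixes \<phi> :: "nat set set multiset \<Rightarrow> 'a::field_char_0"
  assumes g: "nc_gen P"
  shows "conv \<phi> counit {#P#} = \<phi> {#P#}"
proof -
  let ?n = "psize P"
  have P: "NC ?n P" using nc_gen_NC[OF g] by blast
  have "(\<Sum>Q\<in>Up P. \<phi> {#Q#} * counit (quot P Q)) = (\<Sum>Q\<in>Up P. if Q = P then \<phi> {#Q#} else 0)"
  proof (rule sum.cong[OF refl])
    fix Q assume Q: "Q \<in> Up P"
    have QN: "NC ?n Q" using Up_NC[OF Q] .
    have cu: "(counit (quot P Q) :: 'a) = (\<Prod>\<tau>\<in>Q. if card (restr P \<tau>) = 1 then 1 else 0)"
      unfolding counit_def quot_def prod_mset_img ..
    show "\<phi> {#Q#} * counit (quot P Q) = (if Q = P then \<phi> {#Q#} else 0)"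
    proof (cases "\<forall>\<tau>\<in>Q. card (restr P \<tau>) = 1")
      case True
      hence sub: "Q \<subseteq> P" using card1_block[OF Q g] by blast
      have "P \<subseteq> Q"
      proof
        fix B assume B: "B \<in> P"
        obtain t where t: "t \<in> Q" "B \<subseteq> t" using Up_ref[OF Q] B unfolding refines_def by blast
        have "t \<in> P" using sub t by blast
        thus "B \<in> Q" using part_eq[OF NC_part[OF P] B \<open>t \<in> P\<close>] part_block_ne[OF P B] t by blast
      qed
      hence "Q = P" using sub by blast
      moreover have "(counit (quot P Q) :: 'a) = 1" unfolding cu using True by simp
      ultimately show ?thesis by (metis mult.right_neutral)
    next
      case False
      then obtain \<tau> where "\<tau> \<in> Q" "card (restr P \<tau>) \<noteq> 1" by blast
      moreover have "Q \<noteq> P"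
      proof
        assume "Q = P"
        hence "restr P \<tau> = {std \<tau> ` \<tau>}" using restr_self[OF P] \<open>\<tau> \<in> Q\<close> by blast
        thus False using \<open>card (restr P \<tau>) \<noteq> 1\<close> by simp
      qed
      moreover have "(counit (quot P Q) :: 'a) = 0" unfolding cu
        using calculation NC_finite[OF QN] by (intro prod_zero) auto
      ultimately show ?thesis by simp
    qed
  qed
  also have "\<dots> = \<phi> {#P#}" using self_in_Up[OF g] finite_Up by simp
  finally show ?thesis unfolding conv_single .
qed



primrec Rinv :: "(nat set set multiset \<Rightarrow> 'a::field_char_0) \<Rightarrow> nat \<Rightarrow> nat set set \<Rightarrow> 'a" where
  "Rinv \<phi> 0 P = 1"
| "Rinv \<phi> (Suc n) P = (if psize P = Suc n then
     (counit {#P#} - (\<Sum>Q\<in>Up P - {{{1..Suc n}}}. \<phi> {#Q#} * (\<Prod>\<tau>\<in>Q. Rinv \<phi> n (restr P \<tau>))))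
       / \<phi> {#{{1..Suc n}}#}
     else Rinv \<phi> n P)"

definition rinv :: "(nat set set multiset \<Rightarrow> 'a::field_char_0) \<Rightarrow> nat set set multiset \<Rightarrow> 'a" where
  "rinv \<phi> M = (\<Prod>P\<in>#M. Rinv \<phi> (psize P) P)"

lemma Rinv_stable: "psize P \<le> m \<Longrightarrow> Rinv \<phi> m P = Rinv \<phi> (psize P) P"
proof (induction m)
  case 0 thus ?case by simp
next
  case (Suc m)
  show ?case
  proof (cases "psize P = Suc m")
    case True thus ?thesis by simp
  next
    case False
    hence "psize P \<le> m" using Suc.prems by simp
    thus ?thesis using Suc.IH False by simp
  qed
qed

lemma rinv_char: "is_char (rinv \<phi>)"
  unfolding is_char_def rinv_def by simp

lemma conv_In:
  assumes "n \<ge> 1"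
  shows "conv a b {#{{1..n}}#} = a {#{{1..n}}#} * b {#{{1..n}}#}"
  unfolding conv_single Up_In[OF assms] using quot_top[OF NC_In[OF assms]] by simp

lemma counit_single: "(counit {#P#} :: 'a::field_char_0) = (if card P = 1 then 1 else 0)"
  unfolding counit_def by simp

lemma rinv_right:
  fixes \<phi> :: "nat set set multiset \<Rightarrow> 'a::field_char_0"
  assumes nz: "\<forall>n\<ge>1. \<phi> {#{{1..n}}#} \<noteq> 0" and g: "nc_gen P"
  shows "conv \<phi> (rinv \<phi>) {#P#} = counit {#P#}"
proof -
  define n where "n = psize P"
  have P: "NC n P" and n1: "n \<ge> 1" using nc_gen_NC[OF g] n_def by auto
  obtain m where m: "n = Suc m" using n1 by (cases n) auto
  let ?T = "{{1..n}}"
  have T: "?T \<in> Up P" using top_in_Up[OF g] n_def by simp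
  define S where "S = (\<Sum>Q\<in>Up P - {?T}. \<phi> {#Q#} * rinv \<phi> (quot P Q))"
  have S': "S = (\<Sum>Q\<in>Up P - {?T}. \<phi> {#Q#} * (\<Prod>\<tau>\<in>Q. Rinv \<phi> m (restr P \<tau>)))"
    unfolding S_def
  proof (rule sum.cong[OF refl])
    fix Q assume Q: "Q \<in> Up P - {?T}"
    have QN: "NC n Q" using Up_NC Q n_def by blast
    have "Rinv \<phi> (psize (restr P \<tau>)) (restr P \<tau>) = Rinv \<phi> m (restr P \<tau>)" if \<tau>: "\<tau> \<in> Q" for \<tau>
    proof -
      have sub: "\<tau> \<subseteq> {1..n}" using part_block_sub[OF QN \<tau>] .
      have "\<tau> \<noteq> {1..n}" using NC_one_block[OF QN \<tau>] Q by blast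
      hence "\<tau> \<subset> {1..n}" using sub by blast
      hence "card \<tau> < n" using psubset_card_mono[of "{1..n}" \<tau>] by simp
      hence "psize (restr P \<tau>) \<le> m" using psize_restr[OF P sub] m by simp
      thus ?thesis using Rinv_stable by metis
    qed
    thus "\<phi> {#Q#} * rinv \<phi> (quot P Q) = \<phi> {#Q#} * (\<Prod>\<tau>\<in>Q. Rinv \<phi> m (restr P \<tau>))"
      unfolding rinv_def quot_def prod_mset_img by simp
  qed
  have "conv \<phi> (rinv \<phi>) {#P#} = \<phi> {#?T#} * rinv \<phi> (quot P ?T) + S"
    unfolding conv_single S_def using sum.remove[OF finite_Up T] by simp
  also have "rinv \<phi> (quot P ?T) = Rinv \<phi> n P"
  proof -
    have "quot P ?T = {#P#}" by (rule quot_top[OF P])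
    thus ?thesis unfolding rinv_def n_def by simp
  qed
  also have "\<dots> = (counit {#P#} - S) / \<phi> {#?T#}"
    using m n_def S' by simp
  finally show ?thesis using nz n1 by simp
qed

lemma rinv_In_nz:
  fixes \<phi> :: "nat set set multiset \<Rightarrow> 'a::field_char_0"
  assumes nz: "\<forall>n\<ge>1. \<phi> {#{{1..n}}#} \<noteq> 0"
  shows "\<forall>n\<ge>1. rinv \<phi> {#{{1..n}}#} \<noteq> 0"
proof (intro allI impI)
  fix n :: nat assume n: "n \<ge> 1"
  have "conv \<phi> (rinv \<phi>) {#{{1..n}}#} = counit {#{{1..n}}#}"
    using rinv_right[OF nz] NC_In[OF n] n unfolding nc_gen_def by blast
  hence "\<phi> {#{{1..n}}#} * rinv \<phi> {#{{1..n}}#} = 1"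
  proof -
    have "(counit {#{{1..n}}#} :: 'a) = 1" unfolding counit_def by simp
    thus ?thesis using conv_In[OF n, of \<phi> "rinv \<phi>"] \<open>conv \<phi> (rinv \<phi>) {#{{1..n}}#} = counit {#{{1..n}}#}\<close> by simp
  qed
  thus "rinv \<phi> {#{{1..n}}#} \<noteq> 0" by auto
qed



definition ginv :: "nat set \<Rightarrow> nat \<Rightarrow> nat" where
  "ginv X = the_inv_into X (std X)"

lemma ginv_in: "finite X \<Longrightarrow> y \<in> {1..card X} \<Longrightarrow> ginv X y \<in> X"
  unfolding ginv_def using the_inv_into_into[OF std_inj] std_image by (metis order_refl)

lemma std_ginv: "finite X \<Longrightarrow> y \<in> {1..card X} \<Longrightarrow> std X (ginv X y) = y"
  unfolding ginv_def using f_the_inv_into_f[OF std_inj] std_image by metis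

lemma ginv_std: "finite X \<Longrightarrow> x \<in> X \<Longrightarrow> ginv X (std X x) = x"
  unfolding ginv_def using the_inv_into_f_f[OF std_inj] by metis

lemma std_ginv_img: "finite X \<Longrightarrow> \<sigma> \<subseteq> {1..card X} \<Longrightarrow> std X ` ginv X ` \<sigma> = \<sigma>"
proof -
  assume a: "finite X" "\<sigma> \<subseteq> {1..card X}"
  have "std X ` ginv X ` \<sigma> = (\<lambda>y. std X (ginv X y)) ` \<sigma>" by (simp add: image_image)
  also have "\<dots> = (\<lambda>y. y) ` \<sigma>" using std_ginv[OF a(1)] a(2) by (intro image_cong) auto
  finally show ?thesis by simp
qed

lemma ginv_std_img: "finite X \<Longrightarrow> B \<subseteq> X \<Longrightarrow> ginv X ` std X ` B = B"
proof -
  assume a: "finite X" "B \<subseteq> X"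
  have "ginv X ` std X ` B = (\<lambda>y. ginv X (std X y)) ` B" by (simp add: image_image)
  also have "\<dots> = (\<lambda>y. y) ` B" using ginv_std[OF a(1)] a(2) by (intro image_cong) auto
  finally show ?thesis by simp
qed

lemma ginv_img_sub: "finite X \<Longrightarrow> \<sigma> \<subseteq> {1..card X} \<Longrightarrow> ginv X ` \<sigma> \<subseteq> X"
  using ginv_in by blast

lemma ginv_less:
  assumes "finite X" "y1 \<in> {1..card X}" "y2 \<in> {1..card X}" "y1 < y2"
  shows "ginv X y1 < ginv X y2"
  using std_less_iff[OF assms(1) ginv_in[OF assms(1,2)] ginv_in[OF assms(1,3)]]
    std_ginv[OF assms(1,2)] std_ginv[OF assms(1,3)] assms(4) by simp

lemma restr_restr:
  assumes "finite X" "Y \<subseteq> X"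
  shows "restr (restr P X) (std X ` Y) = restr P Y"
proof -
  have inj: "inj_on (std X) X" using std_inj[OF assms(1)] .
  have key: "std X ` (B \<inter> X) \<inter> std X ` Y = std X ` (B \<inter> Y)" for B
  proof -
    have "std X ` (B \<inter> X) \<inter> std X ` Y = std X ` ((B \<inter> X) \<inter> Y)"
      by (rule inj_on_image_Int[OF inj, symmetric]) (use assms(2) in auto)
    also have "(B \<inter> X) \<inter> Y = B \<inter> Y" using assms(2) by blast
    finally show ?thesis .
  qed
  have comp: "std (std X ` Y) ` std X ` (B \<inter> Y) = std Y ` (B \<inter> Y)" for B
  proof -
    have "std (std X ` Y) ` std X ` (B \<inter> Y) = (\<lambda>y. std (std X ` Y) (std X y)) ` (B \<inter> Y)"
      by (simp add: image_image)
    also have "\<dots> = std Y ` (B \<inter> Y)" using std_comp[OF assms] by (intro image_cong) auto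
    finally show ?thesis .
  qed
  show ?thesis
  proof (rule set_eqI, rule iffI)
    fix z assume "z \<in> restr (restr P X) (std X ` Y)"
    then obtain b where b: "b \<in> restr P X" "b \<inter> std X ` Y \<noteq> {}" "z = std (std X ` Y) ` (b \<inter> std X ` Y)"
      unfolding restr_def by blast
    then obtain B where B: "B \<in> P" "b = std X ` (B \<inter> X)" unfolding restr_def by blast
    have "z = std Y ` (B \<inter> Y)" using b(3) B(2) key comp by simp
    moreover have "B \<inter> Y \<noteq> {}" using b(2) B(2) key by auto
    ultimately show "z \<in> restr P Y" unfolding restr_def using B(1) by blast
  next
    fix z assume "z \<in> restr P Y"
    then obtain B where B: "B \<in> P" "B \<inter> Y \<noteq> {}" "z = std Y ` (B \<inter> Y)" unfolding restr_def by blast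
    have BX: "B \<inter> X \<noteq> {}" using B(2) assms(2) by blast
    have "std X ` (B \<inter> X) \<in> restr P X" unfolding restr_def using B(1) BX by blast
    moreover have "std X ` (B \<inter> X) \<inter> std X ` Y \<noteq> {}" using key B(2) by simp
    moreover have "z = std (std X ` Y) ` (std X ` (B \<inter> X) \<inter> std X ` Y)" using key comp B(3) by simp
    ultimately show "z \<in> restr (restr P X) (std X ` Y)" unfolding restr_def by blast
  qed
qed

lemma restr_coarse:
  assumes Q: "part X0 Q" and R: "part X0 R" and QR: "refines Q R" and \<rho>: "\<rho> \<in> R"
  shows "restr Q \<rho> = (\<lambda>\<tau>. std \<rho> ` \<tau>) ` {\<tau>\<in>Q. \<tau> \<subseteq> \<rho>}"
proof -
  have "\<tau> \<inter> \<rho> \<noteq> {} \<longleftrightarrow> \<tau> \<subseteq> \<rho>" if \<tau>: "\<tau> \<in> Q" for \<tau>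
  proof
    assume ne: "\<tau> \<inter> \<rho> \<noteq> {}"
    obtain \<rho>' where \<rho>': "\<rho>' \<in> R" "\<tau> \<subseteq> \<rho>'" using QR \<tau> unfolding refines_def by blast
    have "\<rho>' = \<rho>" using part_disj[OF R \<rho>'(1) \<rho>] \<rho>'(2) ne by blast
    thus "\<tau> \<subseteq> \<rho>" using \<rho>' by simp
  next
    assume "\<tau> \<subseteq> \<rho>" thus "\<tau> \<inter> \<rho> \<noteq> {}" using part_ne[OF Q \<tau>] by blast
  qed
  note iff = this
  show ?thesis
  proof (rule set_eqI, rule iffI)
    fix z assume "z \<in> restr Q \<rho>"
    then obtain \<tau> where t: "\<tau> \<in> Q" "\<tau> \<inter> \<rho> \<noteq> {}" "z = std \<rho> ` (\<tau> \<inter> \<rho>)" unfolding restr_def by blast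
    have "\<tau> \<subseteq> \<rho>" using iff t by blast
    hence "z = std \<rho> ` \<tau>" using t(3) by (simp add: Int_absorb2)
    thus "z \<in> (\<lambda>\<tau>. std \<rho> ` \<tau>) ` {\<tau>\<in>Q. \<tau> \<subseteq> \<rho>}" using t(1) \<open>\<tau> \<subseteq> \<rho>\<close> by blast
  next
    fix z assume "z \<in> (\<lambda>\<tau>. std \<rho> ` \<tau>) ` {\<tau>\<in>Q. \<tau> \<subseteq> \<rho>}"
    then obtain \<tau> where t: "\<tau> \<in> Q" "\<tau> \<subseteq> \<rho>" "z = std \<rho> ` \<tau>" by blast
    have "\<tau> \<inter> \<rho> \<noteq> {}" using iff t by blast
    moreover have "z = std \<rho> ` (\<tau> \<inter> \<rho>)" using t by (simp add: Int_absorb2)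
    ultimately show "z \<in> restr Q \<rho>" unfolding restr_def using t(1) by blast
  qed
qed

lemma restr_refines:
  assumes "refines P Q"
  shows "refines (restr P X) (restr Q X)"
  unfolding refines_def
proof
  fix b assume "b \<in> restr P X"
  then obtain B where B: "B \<in> P" "B \<inter> X \<noteq> {}" "b = std X ` (B \<inter> X)" unfolding restr_def by blast
  obtain C where C: "C \<in> Q" "B \<subseteq> C" using assms B(1) unfolding refines_def by blast
  have "C \<inter> X \<noteq> {}" using B(2) C(2) by blast
  hence "std X ` (C \<inter> X) \<in> restr Q X" unfolding restr_def using C(1) by blast
  moreover have "b \<subseteq> std X ` (C \<inter> X)" using B(3) C(2) by blast
  ultimately show "\<exists>c\<in>restr Q X. b \<subseteq> c" by blast
qed



context
  fixes n :: nat and P R :: "nat set set"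
  assumes P: "NC n P" and R: "NC n R" and PR: "refines P R"
begin

lemma rho_sub: "\<rho> \<in> R \<Longrightarrow> \<rho> \<subseteq> {1..n}"
  using part_block_sub[OF R] .

lemma rho_fin: "\<rho> \<in> R \<Longrightarrow> finite \<rho>"
  using rho_sub finite_subset by blast

lemma rho_ne: "\<rho> \<in> R \<Longrightarrow> \<rho> \<noteq> {}"
  using part_block_ne[OF R] .

lemma prod_regroup:
  assumes Q: "NC n Q" and QR: "refines Q R"
  shows "(\<Prod>\<tau>\<in>Q. f (restr P \<tau>)) = (\<Prod>\<rho>\<in>R. \<Prod>\<sigma>\<in>restr Q \<rho>. f (restr (restr P \<rho>) \<sigma>))"
proof -
  have U: "Q = \<Union>((\<lambda>\<rho>. {\<tau>\<in>Q. \<tau> \<subseteq> \<rho>}) ` R)" using QR unfolding refines_def by blast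
  have fQ: "finite Q" using NC_finite[OF Q] .
  have disj: "\<forall>i\<in>R. \<forall>j\<in>R. i \<noteq> j \<longrightarrow> {\<tau>\<in>Q. \<tau> \<subseteq> i} \<inter> {\<tau>\<in>Q. \<tau> \<subseteq> j} = {}"
  proof (intro ballI impI)
    fix i j assume ij: "i \<in> R" "j \<in> R" "i \<noteq> j"
    have "i \<inter> j = {}" using part_disj[OF NC_part[OF R] ij] .
    thus "{\<tau>\<in>Q. \<tau> \<subseteq> i} \<inter> {\<tau>\<in>Q. \<tau> \<subseteq> j} = {}" using part_block_ne[OF Q] by blast
  qed
  have "(\<Prod>\<tau>\<in>Q. f (restr P \<tau>)) = (\<Prod>\<rho>\<in>R. \<Prod>\<tau>\<in>{\<tau>\<in>Q. \<tau> \<subseteq> \<rho>}. f (restr P \<tau>))"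
    by (subst U, rule prod.UNION_disjoint) (use NC_finite[OF R] fQ disj in auto)
  also have "\<dots> = (\<Prod>\<rho>\<in>R. \<Prod>\<sigma>\<in>restr Q \<rho>. f (restr (restr P \<rho>) \<sigma>))"
  proof (rule prod.cong[OF refl])
    fix \<rho> assume \<rho>: "\<rho> \<in> R"
    have fin: "finite \<rho>" using rho_fin[OF \<rho>] .
    have rc: "restr Q \<rho> = (\<lambda>\<tau>. std \<rho> ` \<tau>) ` {\<tau>\<in>Q. \<tau> \<subseteq> \<rho>}"
      using restr_coarse[OF NC_part[OF Q] NC_part[OF R] QR \<rho>] .
    have inj: "inj_on (\<lambda>\<tau>. std \<rho> ` \<tau>) {\<tau>\<in>Q. \<tau> \<subseteq> \<rho>}"
      by (rule inj_on_subset[OF inj_on_image_Pow[OF std_inj[OF fin]]]) blast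
    have "(\<Prod>\<sigma>\<in>restr Q \<rho>. f (restr (restr P \<rho>) \<sigma>)) = (\<Prod>\<tau>\<in>{\<tau>\<in>Q. \<tau> \<subseteq> \<rho>}. f (restr (restr P \<rho>) (std \<rho> ` \<tau>)))"
      unfolding rc by (rule prod.reindex[OF inj, unfolded comp_def])
    also have "\<dots> = (\<Prod>\<tau>\<in>{\<tau>\<in>Q. \<tau> \<subseteq> \<rho>}. f (restr P \<tau>))"
      by (rule prod.cong[OF refl]) (simp add: restr_restr[OF fin])
    finally show "(\<Prod>\<tau>\<in>{\<tau>\<in>Q. \<tau> \<subseteq> \<rho>}. f (restr P \<tau>)) = (\<Prod>\<sigma>\<in>restr Q \<rho>. f (restr (restr P \<rho>) \<sigma>))" by simp
  qed
  finally show ?thesis .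
qed

lemma restrP_NC: "\<rho> \<in> R \<Longrightarrow> NC (card \<rho>) (restr P \<rho>)"
  using restr_NC[OF P rho_sub] .

lemma psize_restrP: "\<rho> \<in> R \<Longrightarrow> psize (restr P \<rho>) = card \<rho>"
  using psize_restr[OF P rho_sub] .

lemma psizeP: "psize P = n" using psize_NC[OF P] .

definition hmap :: "nat set set \<Rightarrow> nat set \<Rightarrow> nat set set" where
  "hmap Q = restrict (\<lambda>\<rho>. restr Q \<rho>) R"

lemma hmap_apply: "\<rho> \<in> R \<Longrightarrow> hmap Q \<rho> = restr Q \<rho>"
  unfolding hmap_def by simp

lemma hmap_into:
  assumes "Q \<in> Up P" "refines Q R"
  shows "hmap Q \<in> PiE R (\<lambda>\<rho>. Up (restr P \<rho>))"
proof -
  have QN: "NC n Q" using Up_NC[OF assms(1)] psizeP by simp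
  have "restr Q \<rho> \<in> Up (restr P \<rho>)" if \<rho>: "\<rho> \<in> R" for \<rho>
    unfolding Up_def psize_restrP[OF \<rho>]
    using restr_NC[OF QN rho_sub[OF \<rho>]] restr_refines[OF Up_ref[OF assms(1)]] by blast
  thus ?thesis unfolding hmap_def by auto
qed

lemma hmap_inj: "inj_on hmap {Q\<in>Up P. refines Q R}"
proof -
  have sub: "Q1 \<subseteq> Q2" if Q1: "Q1 \<in> Up P" "refines Q1 R" and Q2: "Q2 \<in> Up P" "refines Q2 R"
     and eq: "\<forall>\<rho>\<in>R. restr Q1 \<rho> = restr Q2 \<rho>" for Q1 Q2
  proof
    fix \<tau> assume \<tau>: "\<tau> \<in> Q1"
    have N1: "NC n Q1" and N2: "NC n Q2" using Up_NC Q1 Q2 psizeP by auto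
    obtain \<rho> where \<rho>: "\<rho> \<in> R" "\<tau> \<subseteq> \<rho>" using Q1(2) \<tau> unfolding refines_def by blast
    have "std \<rho> ` \<tau> \<in> restr Q1 \<rho>"
      unfolding restr_coarse[OF NC_part[OF N1] NC_part[OF R] Q1(2) \<rho>(1)] using \<tau> \<rho> by blast
    hence "std \<rho> ` \<tau> \<in> (\<lambda>\<tau>. std \<rho> ` \<tau>) ` {\<tau>\<in>Q2. \<tau> \<subseteq> \<rho>}"
      using eq \<rho>(1) restr_coarse[OF NC_part[OF N2] NC_part[OF R] Q2(2) \<rho>(1)] by simp
    then obtain \<tau>' where \<tau>': "\<tau>' \<in> Q2" "\<tau>' \<subseteq> \<rho>" "std \<rho> ` \<tau> = std \<rho> ` \<tau>'" by blast
    have "\<tau> = \<tau>'" using inj_on_image_eq_iff[OF std_inj[OF rho_fin[OF \<rho>(1)]] \<rho>(2) \<tau>'(2)] \<tau>'(3) by simp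
    thus "\<tau> \<in> Q2" using \<tau>' by simp
  qed
  show ?thesis
  proof (rule inj_onI)
    fix Q1 Q2 assume Q1: "Q1 \<in> {Q\<in>Up P. refines Q R}" and Q2: "Q2 \<in> {Q\<in>Up P. refines Q R}"
      and h: "hmap Q1 = hmap Q2"
    have eq: "\<forall>\<rho>\<in>R. restr Q1 \<rho> = restr Q2 \<rho>"
    proof
      fix \<rho> assume "\<rho> \<in> R"
      have "hmap Q1 \<rho> = hmap Q2 \<rho>" using h by simp
      thus "restr Q1 \<rho> = restr Q2 \<rho>" unfolding hmap_def using \<open>\<rho> \<in> R\<close> by simp
    qed
    show "Q1 = Q2" using sub[of Q1 Q2] sub[of Q2 Q1] Q1 Q2 eq by auto
  qed
qed

lemma hmap_surj:
  assumes F: "F \<in> PiE R (\<lambda>\<rho>. Up (restr P \<rho>))"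
  shows "\<exists>Q\<in>{Q\<in>Up P. refines Q R}. hmap Q = F"
proof -
  define Q where "Q = {ginv \<rho> ` \<sigma> | \<rho> \<sigma>. \<rho> \<in> R \<and> \<sigma> \<in> F \<rho>}"
  have FN: "NC (card \<rho>) (F \<rho>)" if "\<rho> \<in> R" for \<rho>
    using F that Up_NC psize_restrP[OF that] by fastforce
  have Fref: "refines (restr P \<rho>) (F \<rho>)" if "\<rho> \<in> R" for \<rho>
    using F that Up_ref by fastforce
  have \<sigma>sub: "\<sigma> \<subseteq> {1..card \<rho>}" if "\<rho> \<in> R" "\<sigma> \<in> F \<rho>" for \<rho> \<sigma>
    using part_block_sub[OF FN[OF that(1)] that(2)] .
  have \<sigma>ne: "\<sigma> \<noteq> {}" if "\<rho> \<in> R" "\<sigma> \<in> F \<rho>" for \<rho> \<sigma>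
    using part_block_ne[OF FN[OF that(1)] that(2)] .
  have gsub: "ginv \<rho> ` \<sigma> \<subseteq> \<rho>" if "\<rho> \<in> R" "\<sigma> \<in> F \<rho>" for \<rho> \<sigma>
    using ginv_img_sub[OF rho_fin[OF that(1)] \<sigma>sub[OF that]] .
  have pt: "std \<rho> x \<in> \<sigma>" if a: "\<rho> \<in> R" "\<sigma> \<in> F \<rho>" "x \<in> ginv \<rho> ` \<sigma>" for \<rho> \<sigma> x
  proof -
    obtain y where "y \<in> \<sigma>" "x = ginv \<rho> y" using a(3) by blast
    thus ?thesis using std_ginv[OF rho_fin[OF a(1)]] \<sigma>sub[OF a(1,2)] by auto
  qed
  have part: "part {1..n} Q" unfolding part_def
  proof (intro conjI ballI impI)
    fix \<tau> assume "\<tau> \<in> Q"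
    then obtain \<rho> \<sigma> where "\<rho> \<in> R" "\<sigma> \<in> F \<rho>" "\<tau> = ginv \<rho> ` \<sigma>" unfolding Q_def by blast
    thus "\<tau> \<noteq> {}" using \<sigma>ne by blast
  next
    fix \<tau>1 \<tau>2 assume "\<tau>1 \<in> Q" "\<tau>2 \<in> Q" "\<tau>1 \<noteq> \<tau>2"
    then obtain \<rho>1 \<sigma>1 \<rho>2 \<sigma>2 where t1: "\<rho>1 \<in> R" "\<sigma>1 \<in> F \<rho>1" "\<tau>1 = ginv \<rho>1 ` \<sigma>1"
      and t2: "\<rho>2 \<in> R" "\<sigma>2 \<in> F \<rho>2" "\<tau>2 = ginv \<rho>2 ` \<sigma>2" unfolding Q_def by blast
    show "\<tau>1 \<inter> \<tau>2 = {}"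
    proof (cases "\<rho>1 = \<rho>2")
      case True
      have "\<sigma>1 \<noteq> \<sigma>2" using True t1 t2 \<open>\<tau>1 \<noteq> \<tau>2\<close> by blast
      hence d: "\<sigma>1 \<inter> \<sigma>2 = {}" using part_disj[OF NC_part[OF FN[OF t1(1)]] t1(2)] t2(2) True by blast
      show ?thesis
      proof (rule ccontr)
        assume "\<tau>1 \<inter> \<tau>2 \<noteq> {}"
        then obtain x where "x \<in> \<tau>1" "x \<in> \<tau>2" by blast
        hence "std \<rho>1 x \<in> \<sigma>1" "std \<rho>1 x \<in> \<sigma>2" using pt t1 t2 True by blast+
        thus False using d by blast
      qed
    next
      case False
      have "\<rho>1 \<inter> \<rho>2 = {}" using part_disj[OF NC_part[OF R] t1(1) t2(1) False] .
      thus ?thesis using gsub t1 t2 by blast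
    qed
  next
    show "\<Union>Q = {1..n}"
    proof
      show "\<Union>Q \<subseteq> {1..n}" unfolding Q_def using gsub rho_sub by blast
    next
      show "{1..n} \<subseteq> \<Union>Q"
      proof
        fix x assume "x \<in> {1..n}"
        then obtain \<rho> where \<rho>: "\<rho> \<in> R" "x \<in> \<rho>" using part_cover[OF NC_part[OF R]] by blast
        have "std \<rho> x \<in> {1..card \<rho>}" using std_range[OF rho_fin[OF \<rho>(1)] \<rho>(2)] .
        then obtain \<sigma> where \<sigma>: "\<sigma> \<in> F \<rho>" "std \<rho> x \<in> \<sigma>"
          using part_cover[OF NC_part[OF FN[OF \<rho>(1)]]] by blast
        have "x = ginv \<rho> (std \<rho> x)" using ginv_std[OF rho_fin[OF \<rho>(1)] \<rho>(2)] by simp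
        hence "x \<in> ginv \<rho> ` \<sigma>" using \<sigma> by blast
        thus "x \<in> \<Union>Q" unfolding Q_def using \<rho> \<sigma> by blast
      qed
    qed
  qed
  have nc: "noncrossing Q" unfolding noncrossing_def
  proof (rule notI, elim bexE exE conjE)
    fix \<tau>1 \<tau>2 a b c d
    assume "\<tau>1 \<in> Q" "\<tau>2 \<in> Q" "\<tau>1 \<noteq> \<tau>2" and pts: "a \<in> \<tau>1" "b \<in> \<tau>1" "c \<in> \<tau>2" "d \<in> \<tau>2"
      "a < c" "c < b" "b < d"
    then obtain \<rho>1 \<sigma>1 \<rho>2 \<sigma>2 where t1: "\<rho>1 \<in> R" "\<sigma>1 \<in> F \<rho>1" "\<tau>1 = ginv \<rho>1 ` \<sigma>1"
      and t2: "\<rho>2 \<in> R" "\<sigma>2 \<in> F \<rho>2" "\<tau>2 = ginv \<rho>2 ` \<sigma>2" unfolding Q_def by blast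
    show False
    proof (cases "\<rho>1 = \<rho>2")
      case True
      let ?r = "\<rho>1"
      have fin: "finite ?r" using rho_fin[OF t1(1)] .
      have "\<sigma>1 \<noteq> \<sigma>2" using True t1 t2 \<open>\<tau>1 \<noteq> \<tau>2\<close> by blast
      have inr: "a \<in> ?r" "b \<in> ?r" "c \<in> ?r" "d \<in> ?r" using gsub t1 t2 pts True by blast+
      have "std ?r a \<in> \<sigma>1" "std ?r b \<in> \<sigma>1" using pt t1 pts by blast+
      moreover have "std ?r c \<in> \<sigma>2" "std ?r d \<in> \<sigma>2" using pt t2 pts True by blast+
      moreover have "std ?r a < std ?r c" "std ?r c < std ?r b" "std ?r b < std ?r d"
        using std_less_iff[OF fin] inr pts by blast+
      ultimately have "\<exists>B\<in>F ?r. \<exists>C\<in>F ?r. B \<noteq> C \<and> (\<exists>a b c d. a \<in> B \<and> b \<in> B \<and> c \<in> C \<and> d \<in> C \<and> a < c \<and> c < b \<and> b < d)"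
        using t1(2) t2(2) True \<open>\<sigma>1 \<noteq> \<sigma>2\<close> by (intro bexI[of _ \<sigma>1] bexI[of _ \<sigma>2]) blast+
      thus False using NC_nc[OF FN[OF t1(1)]] unfolding noncrossing_def by simp
    next
      case False
      have "a \<in> \<rho>1" "b \<in> \<rho>1" "c \<in> \<rho>2" "d \<in> \<rho>2" using gsub t1 t2 pts by blast+
      hence "\<exists>B\<in>R. \<exists>C\<in>R. B \<noteq> C \<and> (\<exists>a b c d. a \<in> B \<and> b \<in> B \<and> c \<in> C \<and> d \<in> C \<and> a < c \<and> c < b \<and> b < d)"
        using t1(1) t2(1) False pts by (intro bexI[of _ \<rho>1] bexI[of _ \<rho>2]) blast+
      thus False using NC_nc[OF R] unfolding noncrossing_def by simp
    qed
  qed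
  have QN: "NC n Q" unfolding NC_iff using part nc by simp
  have PQ: "refines P Q" unfolding refines_def
  proof
    fix B assume B: "B \<in> P"
    obtain \<rho> where \<rho>: "\<rho> \<in> R" "B \<subseteq> \<rho>" using PR B unfolding refines_def by blast
    have "B \<inter> \<rho> = B" using \<rho>(2) by blast
    hence "std \<rho> ` B \<in> restr P \<rho>" unfolding restr_def using B part_block_ne[OF P B] by force
    then obtain \<sigma> where \<sigma>: "\<sigma> \<in> F \<rho>" "std \<rho> ` B \<subseteq> \<sigma>" using Fref[OF \<rho>(1)] unfolding refines_def by blast
    have "B = ginv \<rho> ` std \<rho> ` B" using ginv_std_img[OF rho_fin[OF \<rho>(1)] \<rho>(2)] by simp
    also have "\<dots> \<subseteq> ginv \<rho> ` \<sigma>" using \<sigma>(2) by blast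
    finally show "\<exists>C\<in>Q. B \<subseteq> C" unfolding Q_def using \<rho>(1) \<sigma>(1) by blast
  qed
  have QR: "refines Q R" unfolding refines_def
  proof
    fix \<tau> assume "\<tau> \<in> Q"
    then obtain \<rho> \<sigma> where t: "\<rho> \<in> R" "\<sigma> \<in> F \<rho>" "\<tau> = ginv \<rho> ` \<sigma>" unfolding Q_def by blast
    hence "\<tau> \<subseteq> \<rho>" using gsub by blast
    thus "\<exists>C\<in>R. \<tau> \<subseteq> C" using t(1) by blast
  qed
  have "hmap Q = F"
  proof (rule ext)
    fix \<rho>
    show "hmap Q \<rho> = F \<rho>"
    proof (cases "\<rho> \<in> R")
      case False
      have "F \<rho> = undefined" using PiE_arb[OF F False] .
      thus ?thesis unfolding hmap_def using False by simp
    next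
      case True
      have fin: "finite \<rho>" using rho_fin[OF True] .
      have e1: "{\<tau>\<in>Q. \<tau> \<subseteq> \<rho>} = (\<lambda>\<sigma>. ginv \<rho> ` \<sigma>) ` F \<rho>"
      proof (rule set_eqI, rule iffI)
        fix \<tau> assume "\<tau> \<in> {\<tau>\<in>Q. \<tau> \<subseteq> \<rho>}"
        then obtain \<rho>' \<sigma> where t: "\<rho>' \<in> R" "\<sigma> \<in> F \<rho>'" "\<tau> = ginv \<rho>' ` \<sigma>" "\<tau> \<subseteq> \<rho>"
          unfolding Q_def by blast
        have "\<tau> \<subseteq> \<rho>'" using gsub t by blast
        moreover have "\<tau> \<noteq> {}" using \<sigma>ne t by blast
        ultimately have "\<rho>' = \<rho>" using part_disj[OF NC_part[OF R] t(1) True] t(4) by blast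
        thus "\<tau> \<in> (\<lambda>\<sigma>. ginv \<rho> ` \<sigma>) ` F \<rho>" using t by blast
      next
        fix \<tau> assume "\<tau> \<in> (\<lambda>\<sigma>. ginv \<rho> ` \<sigma>) ` F \<rho>"
        then obtain \<sigma> where "\<sigma> \<in> F \<rho>" "\<tau> = ginv \<rho> ` \<sigma>" by blast
        thus "\<tau> \<in> {\<tau>\<in>Q. \<tau> \<subseteq> \<rho>}" unfolding Q_def using True gsub by blast
      qed
      have "restr Q \<rho> = (\<lambda>\<tau>. std \<rho> ` \<tau>) ` (\<lambda>\<sigma>. ginv \<rho> ` \<sigma>) ` F \<rho>"
        using restr_coarse[OF part NC_part[OF R] QR True] e1 by simp
      also have "\<dots> = (\<lambda>\<sigma>. std \<rho> ` ginv \<rho> ` \<sigma>) ` F \<rho>" by (simp add: image_image)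
      also have "\<dots> = (\<lambda>\<sigma>. \<sigma>) ` F \<rho>"
        using std_ginv_img[OF fin] \<sigma>sub[OF True] by (intro image_cong) auto
      finally show ?thesis unfolding hmap_def using True by simp
    qed
  qed
  moreover have "Q \<in> Up P" unfolding Up_def psizeP using QN PQ by simp
  ultimately show ?thesis using QR by blast
qed

lemma hmap_bij: "bij_betw hmap {Q\<in>Up P. refines Q R} (PiE R (\<lambda>\<rho>. Up (restr P \<rho>)))"
  unfolding bij_betw_def
proof
  show "inj_on hmap {Q\<in>Up P. refines Q R}" by (rule hmap_inj)
next
  show "hmap ` {Q\<in>Up P. refines Q R} = PiE R (\<lambda>\<rho>. Up (restr P \<rho>))"
    using hmap_into hmap_surj by blast
qed

end



lemma refines_trans: "refines P Q \<Longrightarrow> refines Q R \<Longrightarrow> refines P R"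
  unfolding refines_def by (meson order_trans)

lemma Up_trans: "Q \<in> Up P \<Longrightarrow> Up Q = {R\<in>Up P. refines Q R}"
proof -
  assume Q: "Q \<in> Up P"
  have "psize Q = psize P" using psize_NC[OF Up_NC[OF Q]] .
  thus ?thesis unfolding Up_def using Up_ref[OF Q] refines_trans by auto
qed

lemma inner_eq:
  fixes b c :: "nat set set multiset \<Rightarrow> 'a::field_char_0"
  assumes b: "is_char b" and c: "is_char c" and P: "NC n P" and R: "R \<in> Up P"
  shows "(\<Sum>Q\<in>{Q\<in>Up P. refines Q R}. b (quot Q R) * c (quot P Q)) = conv b c (quot P R)"
proof -
  have psP: "psize P = n" using psize_NC[OF P] .
  have RN: "NC n R" using Up_NC[OF R] psP by simp
  have PR: "refines P R" using Up_ref[OF R] .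
  have fR: "finite R" using NC_finite[OF RN] .
  let ?A = "{Q\<in>Up P. refines Q R}"
  let ?B = "PiE R (\<lambda>\<rho>. Up (restr P \<rho>))"
  let ?g = "\<lambda>F. \<Prod>\<rho>\<in>R. b {#F \<rho>#} * c (quot (restr P \<rho>) (F \<rho>))"
  have "conv b c (quot P R) = (\<Prod>\<rho>\<in>R. conv b c {#restr P \<rho>#})"
    using conv_mult[of b c "quot P R"] unfolding quot_def prod_mset_img .
  also have "\<dots> = (\<Prod>\<rho>\<in>R. \<Sum>S\<in>Up (restr P \<rho>). b {#S#} * c (quot (restr P \<rho>) S))"
    unfolding conv_single ..
  also have "\<dots> = (\<Sum>F\<in>?B. ?g F)"
    by (rule prod_sum_PiE[OF fR finite_Up])
  also have "\<dots> = (\<Sum>Q\<in>?A. ?g (hmap R Q))"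
    by (rule sum.reindex_bij_betw[OF hmap_bij[OF P RN PR], symmetric])
  also have "\<dots> = (\<Sum>Q\<in>?A. b (quot Q R) * c (quot P Q))"
  proof (rule sum.cong[OF refl])
    fix Q assume QA: "Q \<in> ?A"
    have QN: "NC n Q" using Up_NC QA psP by auto
    have QR: "refines Q R" using QA by simp
    have "?g (hmap R Q) = (\<Prod>\<rho>\<in>R. b {#restr Q \<rho>#} * c (quot (restr P \<rho>) (restr Q \<rho>)))"
      by (rule prod.cong[OF refl]) (simp add: hmap_apply[OF P RN PR])
    also have "\<dots> = (\<Prod>\<rho>\<in>R. b {#restr Q \<rho>#}) * (\<Prod>\<rho>\<in>R. c (quot (restr P \<rho>) (restr Q \<rho>)))"
      by (rule prod.distrib)
    also have "(\<Prod>\<rho>\<in>R. b {#restr Q \<rho>#}) = b (quot Q R)"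
      using quot_char[OF b QN RN] by simp
    also have "(\<Prod>\<rho>\<in>R. c (quot (restr P \<rho>) (restr Q \<rho>))) = 
        (\<Prod>\<rho>\<in>R. \<Prod>\<sigma>\<in>restr Q \<rho>. c {#restr (restr P \<rho>) \<sigma>#})"
    proof (rule prod.cong[OF refl])
      fix \<rho> assume \<rho>: "\<rho> \<in> R"
      have sub: "\<rho> \<subseteq> {1..n}" using part_block_sub[OF RN \<rho>] .
      show "c (quot (restr P \<rho>) (restr Q \<rho>)) = (\<Prod>\<sigma>\<in>restr Q \<rho>. c {#restr (restr P \<rho>) \<sigma>#})"
        by (rule quot_char[OF c restr_NC[OF P sub] restr_NC[OF QN sub]])
    qed
    also have "\<dots> = (\<Prod>\<tau>\<in>Q. c {#restr P \<tau>#})"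
      by (rule prod_regroup[OF P RN PR QN QR, symmetric])
    also have "\<dots> = c (quot P Q)" using quot_char[OF c P QN] by simp
    finally show "?g (hmap R Q) = b (quot Q R) * c (quot P Q)" .
  qed
  finally show ?thesis by simp
qed

lemma assoc_single:
  fixes a b c :: "nat set set multiset \<Rightarrow> 'a::field_char_0"
  assumes b: "is_char b" and c: "is_char c" and g: "nc_gen P"
  shows "conv (conv a b) c {#P#} = conv a (conv b c) {#P#}"
proof -
  define n where "n = psize P"
  have P: "NC n P" using nc_gen_NC[OF g] n_def by simp
  have "conv (conv a b) c {#P#} = (\<Sum>Q\<in>Up P. (\<Sum>R\<in>Up Q. a {#R#} * b (quot Q R)) * c (quot P Q))"
    unfolding conv_single ..
  also have "\<dots> = (\<Sum>Q\<in>Up P. \<Sum>R\<in>{R\<in>Up P. refines Q R}. a {#R#} * (b (quot Q R) * c (quot P Q)))"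
  proof (rule sum.cong[OF refl])
    fix Q assume "Q \<in> Up P"
    show "(\<Sum>R\<in>Up Q. a {#R#} * b (quot Q R)) * c (quot P Q) =
        (\<Sum>R\<in>{R\<in>Up P. refines Q R}. a {#R#} * (b (quot Q R) * c (quot P Q)))"
      unfolding Up_trans[OF \<open>Q \<in> Up P\<close>] sum_distrib_right by (simp add: mult.assoc)
  qed
  also have "\<dots> = (\<Sum>R\<in>Up P. \<Sum>Q\<in>{Q\<in>Up P. refines Q R}. a {#R#} * (b (quot Q R) * c (quot P Q)))"
    by (rule sum.swap_restrict[OF finite_Up finite_Up])
  also have "\<dots> = (\<Sum>R\<in>Up P. a {#R#} * conv b c (quot P R))"
  proof (rule sum.cong[OF refl])
    fix R assume R: "R \<in> Up P"
    show "(\<Sum>Q\<in>{Q\<in>Up P. refines Q R}. a {#R#} * (b (quot Q R) * c (quot P Q))) = a {#R#} * conv b c (quot P R)"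
      unfolding sum_distrib_left[symmetric] inner_eq[OF b c P R] ..
  qed
  also have "\<dots> = conv a (conv b c) {#P#}" unfolding conv_single ..
  finally show ?thesis .
qed

lemma conv_assoc:
  assumes "is_char a" "is_char b" "is_char c" "monomial M"
  shows "conv (conv a b) c M = conv a (conv b c) M"
  unfolding conv_mult[of "conv a b" c M] conv_mult[of a "conv b c" M]
  using assoc_single[OF assms(2,3)] assms(4) unfolding monomial_def
  by (intro arg_cong[where f=prod_mset] image_mset_cong) simp



lemma counit_mult: "counit M = (\<Prod>P\<in>#M. counit {#P#})"
  unfolding counit_def by simp

lemma right_inv_all:
  fixes \<phi> :: "nat set set multiset \<Rightarrow> 'a::field_char_0"
  assumes nz: "\<forall>n\<ge>1. \<phi> {#{{1..n}}#} \<noteq> 0" and M: "monomial M"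
  shows "conv \<phi> (rinv \<phi>) M = counit M"
  unfolding conv_mult[of _ _ M] counit_mult[of M]
  using rinv_right[OF nz] M unfolding monomial_def
  by (intro arg_cong[where f=prod_mset] image_mset_cong) simp

lemma char_monomial_eq:
  assumes "is_char \<phi>" "monomial M" "\<And>P. nc_gen P \<Longrightarrow> \<chi> {#P#} = \<phi> {#P#}"
    "\<chi> M = (\<Prod>x\<in>#M. \<chi> {#x#})"
  shows "\<chi> M = \<phi> M"
proof -
  have g: "\<forall>x\<in>#M. nc_gen x" using assms(2) unfolding monomial_def by blast
  have "(\<Prod>x\<in>#M. \<chi> {#x#}) = (\<Prod>x\<in>#M. \<phi> {#x#})"
    using g assms(3) by (intro arg_cong[where f=prod_mset] image_mset_cong) simp
  thus ?thesis unfolding assms(4) char_prod[OF assms(1) g, symmetric] .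
qed

theorem mainTheorem9:
  fixes \<phi> :: "nat set set multiset \<Rightarrow> 'a::field_char_0"
  assumes "is_char \<phi>"
  shows "char_invertible \<phi> \<longleftrightarrow> (\<forall>n::nat\<ge>1. \<phi> {#{{1..n}}#} \<noteq> 0)"
proof
  assume "char_invertible \<phi>"
  then obtain \<psi> where \<psi>: "\<forall>M. monomial M \<longrightarrow> conv \<phi> \<psi> M = counit M"
    unfolding char_invertible_def by blast
  show "\<forall>n::nat\<ge>1. \<phi> {#{{1..n}}#} \<noteq> 0"
  proof (intro allI impI)
    fix n :: nat assume n: "n \<ge> 1"
    have "monomial {#{{1..n}}#}" unfolding monomial_def nc_gen_def using NC_In[OF n] n by auto
    hence "conv \<phi> \<psi> {#{{1..n}}#} = counit {#{{1..n}}#}" using \<psi> by blast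
    moreover have "(counit {#{{1..n}}#} :: 'a) = 1" unfolding counit_def by simp
    ultimately have "\<phi> {#{{1..n}}#} * \<psi> {#{{1..n}}#} = 1" using conv_In[OF n, of \<phi> \<psi>] by simp
    thus "\<phi> {#{{1..n}}#} \<noteq> 0" by auto
  qed
next
  assume nz: "\<forall>n::nat\<ge>1. \<phi> {#{{1..n}}#} \<noteq> 0"
  define \<psi> where "\<psi> = rinv \<phi>"
  define \<chi> where "\<chi> = rinv \<psi>"
  have R1: "\<And>M. monomial M \<Longrightarrow> conv \<phi> \<psi> M = counit M"
    unfolding \<psi>_def using right_inv_all[OF nz] by blast
  have nz2: "\<forall>n\<ge>1. \<psi> {#{{1..n}}#} \<noteq> 0" unfolding \<psi>_def using rinv_In_nz[OF nz] .
  have R2: "\<And>M. monomial M \<Longrightarrow> conv \<psi> \<chi> M = counit M"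
    unfolding \<chi>_def using right_inv_all[OF nz2] by blast
  have cp: "is_char \<psi>" "is_char \<chi>" unfolding \<psi>_def \<chi>_def by (rule rinv_char)+
  have eq: "\<phi> M = \<chi> M" if M: "monomial M" for M
  proof -
    have "\<phi> M = conv \<phi> counit M"
      by (rule char_monomial_eq[OF assms M, symmetric]) (rule conv_unit_right, assumption, rule conv_mult)
    also have "\<dots> = conv \<phi> (conv \<psi> \<chi>) M"
      by (rule conv_cong[OF _ _ M]) (simp_all add: R2)
    also have "\<dots> = conv (conv \<phi> \<psi>) \<chi> M"
      by (rule conv_assoc[OF assms cp M, symmetric])
    also have "\<dots> = conv counit \<chi> M"
      by (rule conv_cong[OF _ _ M]) (simp_all add: R1)
    also have "\<dots> = \<chi> M"
      by (rule char_monomial_eq[OF cp(2) M]) (rule conv_unit_left, assumption, rule conv_mult)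
    finally show ?thesis .
  qed
  have "conv \<psi> \<phi> M = counit M" if M: "monomial M" for M
  proof -
    have "conv \<psi> \<phi> M = conv \<psi> \<chi> M" by (rule conv_cong[OF _ _ M]) (simp_all add: eq)
    thus ?thesis using R2[OF M] by simp
  qed
  thus "char_invertible \<phi>" unfolding char_invertible_def using cp(1) R1 by blast
qed

end
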